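(* In the SLAR setting, let $(w^{(t)})_{t\ge0}$ be the sequence produced by adversarial training. Let $x_i$ be a non-robust feature. Then for all $t>0$: if $w_i^{(t)}>0$ then $w_i^{(t+1)}\le 0$, and if $w_i^{(t)}<0$ then $w_i^{(t+1)}\ge0$.
   Context: SLAR setting: $(x,y)$ is drawn from a distribution $\mathcal D$ on $\mathbb R^d\times\{-1,+1\}$, $x=(x_1,\dots,x_d)$ with finite second moments, such that (A1) for each $i$ there is a constant $\mu_i$ with $\mathbb E[x_i\mid y]=y\mu_i$ for $y\in\{-1,1\}$, and (A2) the coordinates $x_1,\dots,x_d$ are mutually independent conditionally on $y$. Fix $\lambda>0$ and a perturbation budget $\varepsilon>0$; $\mathcal B(\varepsilon)=\{a\in\mathbb R^d:\|a\|_\infty\le\varepsilon\}$. A perturbation function is a measurable map $\delta$ assigning to each $(x,y)$ a vector $\delta(x,y)\in\mathcal B(\varepsilon)$. For a perturbation function $\delta$ and $w\in\mathbb R^d$ let $U(\delta,w)=\mathbb E_{(x,y)\sim\mathcal D}[\max(0,1-yw^\top(x+\delta(x,y)))]+\frac{\lambda}{2}\|w\|_2^2$. A feature $x_i$ is non-robust if $|\mu_i|\le\varepsilon$, and robust otherwise. $\operatorname{sign}$ is coordinatewise with $\operatorname{sign}(0)=0$. Adversarial training (AT): from an arbitrary $w^{(0)}\in\mathbb R^d$, for $t\ge1$ set $\delta^{(t)}(x,y)=-y\varepsilon\operatorname{sign}(w^{(t-1)})$ and $w^{(t)}=\arg\min_{w\in\mathbb R^d}U(\delta^{(t)},w)$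 (this minimizer is unique). *)

theory Defs
  imports "HOL-Probability.Probability"
begin

text \<open>The SLAR distribution assumptions: D is a probability distribution on R^d x R
  (Borel sets), the label is almost surely in {-1,1}, coordinates have finite second
  moments, (A1) E[x_i | y] = y mu_i, i.e. E[x_i 1{y=c}] = c mu_i P(y=c) for c = +-1,
  (A2) coordinates are mutually independent conditionally on y (under the conditional
  distribution given y = c, whenever P(y=c) > 0).\<close>
definition slar_dist :: "((real^'n) \<times> real) measure \<Rightarrow> real^'n \<Rightarrow> bool" where
  "slar_dist D \<mu> \<longleftrightarrow>
     prob_space D \<and> sets D = sets borel \<and>
     (AE p in D. snd p = 1 \<or> snd p = -1) \<and>
     (\<forall>i. integrable D (\<lambda>p. (fst p $ i)\<^sup>2)) \<and>
     (\<forall>i. \<forall>c\<in>{-1, 1::real}.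
        (\<integral>p. indicator {p. snd p = c} p * (fst p $ i) \<partial>D)
          = c * (\<mu> $ i) * measure D {p. snd p = c}) \<and>
     (\<forall>c\<in>{-1, 1::real}. measure D {p. snd p = c} > 0 \<longrightarrow>
        prob_space.indep_vars (uniform_measure D {p. snd p = c})
          (\<lambda>_. borel) (\<lambda>i p. fst p $ i) UNIV)"

definition U_obj :: "((real^'n) \<times> real) measure \<Rightarrow> real \<Rightarrow> ((real^'n) \<times> real \<Rightarrow> real^'n)
    \<Rightarrow> real^'n \<Rightarrow> real" where
  "U_obj D lam \<delta> w =
     (\<integral>p. max 0 (1 - snd p * (w \<bullet> (fst p + \<delta> p))) \<partial>D) + lam / 2 * (norm w)\<^sup>2"

definition at_perturb :: "real \<Rightarrow> real^'n \<Rightarrow> ((real^'n) \<times> real \<Rightarrow> real^'n)" where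
  "at_perturb \<epsilon> w = (\<lambda>p. (- (snd p * \<epsilon>)) *\<^sub>R (\<chi> j. sgn (w $ j)))"

text \<open>AT sequence: w (t+1) minimizes U(at_perturb eps (w t), .) for every t >= 0
  (the minimizer is unique, so this determines the sequence from w 0).\<close>
definition AT_seq :: "((real^'n) \<times> real) measure \<Rightarrow> real \<Rightarrow> real \<Rightarrow> (nat \<Rightarrow> real^'n) \<Rightarrow> bool" where
  "AT_seq D lam \<epsilon> w \<longleftrightarrow>
     (\<forall>t. \<forall>v. U_obj D lam (at_perturb \<epsilon> (w t)) (w (Suc t))
                \<le> U_obj D lam (at_perturb \<epsilon> (w t)) v)"

end

theory Submission
  imports Defs
begin

lemma mfst[measurable]: "(\<lambda>p::(real^'n)\<times>real. fst p $ j) \<in> borel_measurable borel"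
  by (intro borel_measurable_continuous_onI continuous_intros)
lemma msnd[measurable]: "(\<lambda>p::(real^'n)\<times>real. snd p) \<in> borel_measurable borel"
  by (intro borel_measurable_continuous_onI continuous_intros)
lemma minner[measurable]: "(\<lambda>p::(real^'n)\<times>real. W \<bullet> fst p) \<in> borel_measurable borel"
  by (intro borel_measurable_continuous_onI continuous_intros)

locale slar =
  fixes D :: "((real^'n) \<times> real) measure" and \<mu> :: "real^'n"
  assumes sd: "slar_dist D \<mu>"
begin

lemma PS: "prob_space D" using sd by (simp add: slar_dist_def)
lemma FM: "finite_measure D" using PS by (simp add: prob_space_def)
lemma setsD: "sets D = sets borel" using sd by (simp add: slar_dist_def)
lemma measD: "borel_measurable D = borel_measurable borel"
  by (rule measurable_cong_sets) (simp_all add: setsD)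
lemma spaceD: "space D = UNIV" using sets_eq_imp_space_eq[OF setsD] by simp
lemma AEy: "AE p in D. snd p = 1 \<or> snd p = -1" using sd by (simp add: slar_dist_def)

lemma int_x: "integrable D (\<lambda>p. fst p $ j)"
proof -
  have "integrable D (\<lambda>p. (fst p $ j)\<^sup>2)" using sd by (simp add: slar_dist_def)
  moreover have "(\<lambda>p. fst p $ j) \<in> borel_measurable D" by (simp add: measD)
  ultimately show ?thesis using finite_measure.square_integrable_imp_integrable[OF FM] by blast
qed

lemma int_const: "integrable D (\<lambda>p. c::real)"
  using FM by (simp add: finite_measure.integrable_const)

lemma S_sets: "{p::(real^'n)\<times>real. snd p = c} \<in> sets D"
  unfolding setsD by measurable

lemma unif_eq:
  assumes A: "A \<in> sets D" "measure D A > 0"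
  shows "uniform_measure D A = density D (\<lambda>x. ennreal (indicator A x / measure D A))"
proof -
  have "(\<lambda>x. indicator A x / emeasure D A) = (\<lambda>x. ennreal (indicator A x / measure D A))"
  proof
    fix x
    have e: "emeasure D A = ennreal (measure D A)"
      using finite_measure.emeasure_eq_measure[OF FM] by simp
    show "indicator A x / emeasure D A = ennreal (indicator A x / measure D A)"
      using A(2) by (cases "x \<in> A") (simp_all add: e divide_ennreal[symmetric])
  qed
  then show ?thesis unfolding uniform_measure_def by simp
qed

lemma unif_integral:
  assumes A: "A \<in> sets D" "measure D A > 0" and f: "f \<in> borel_measurable D"
  shows "(\<integral>x. f x \<partial>uniform_measure D A) = (\<integral>x. indicator A x * f x \<partial>D) / measure D A"
proof -
  have "(\<integral>x. f x \<partial>uniform_measure D A) = (\<integral>x. (indicator A x / measure D A) *\<^sub>R f x \<partial>D)"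
    unfolding unif_eq[OF A] using A f by (intro integral_density) auto
  also have "\<dots> = (\<integral>x. (indicator A x * f x) / measure D A \<partial>D)" by simp
  also have "\<dots> = (\<integral>x. indicator A x * f x \<partial>D) / measure D A" by simp
  finally show ?thesis .
qed

lemma unif_integrable:
  assumes A: "A \<in> sets D" "measure D A > 0" and f: "integrable D f"
  shows "integrable (uniform_measure D A) (f :: _ \<Rightarrow> real)"
proof -
  have fm: "f \<in> borel_measurable D" using f by auto
  have "integrable D (\<lambda>x. (indicator A x * f x) / measure D A)"
    using integrable_divide_zero[OF integrable_real_mult_indicator[OF A(1) f], of "measure D A"]
    by (simp add: mult.commute)
  then have "integrable D (\<lambda>x. (indicator A x / measure D A) *\<^sub>R f x)" by simp
  then show ?thesis unfolding unif_eq[OF A] using A fm by (subst integrable_density) auto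
qed

lemma key:
  fixes W :: "real^'n" and G :: "real \<Rightarrow> real" and i :: 'n and c :: real
  assumes c: "c = -1 \<or> c = 1" and Gm: "G \<in> borel_measurable borel" and Gb: "\<And>r. \<bar>G r\<bar> \<le> 1"
  shows "(\<integral>p. indicator {p::(real^'n)\<times>real. snd p = c} p * (fst p $ i * G (\<Sum>j\<in>UNIV-{i}. W$j * fst p $ j)) \<partial>D)
       = c * \<mu>$i * (\<integral>p. indicator {p::(real^'n)\<times>real. snd p = c} p * G (\<Sum>j\<in>UNIV-{i}. W$j * fst p $ j) \<partial>D)"
proof -
  define S where "S = {p::(real^'n)\<times>real. snd p = c}"
  define \<Phi> where "\<Phi> = (\<lambda>p::(real^'n)\<times>real. G (\<Sum>j\<in>UNIV-{i}. W$j * fst p $ j))"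
  have Sm: "S \<in> sets D" unfolding S_def by (rule S_sets)
  have \<Phi>m: "\<Phi> \<in> borel_measurable D" unfolding measD \<Phi>_def using Gm by measurable
  have xm: "(\<lambda>p. fst p $ i) \<in> borel_measurable D" by (simp add: measD)
  have \<Phi>int: "integrable D \<Phi>"
    by (rule Bochner_Integration.integrable_bound[OF int_const[of 1] \<Phi>m]) (auto simp: \<Phi>_def Gb)
  show ?thesis
  proof (cases "measure D S = 0")
    case True
    have "emeasure D S = 0" using True finite_measure.emeasure_eq_measure[OF FM, of S] by simp
    then have "S \<in> null_sets D" using Sm by auto
    then have ae: "AE p in D. p \<notin> S" by (rule AE_not_in)
    have "(\<integral>p. indicator S p * (fst p $ i * \<Phi> p) \<partial>D) = (\<integral>p. 0 \<partial>D)"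
      by (rule integral_cong_AE) (use ae xm \<Phi>m Sm in \<open>auto intro!: borel_measurable_times borel_measurable_indicator\<close>)
    moreover have "(\<integral>p. indicator S p * \<Phi> p \<partial>D) = (\<integral>p. 0 \<partial>D)"
      by (rule integral_cong_AE) (use ae xm \<Phi>m Sm in \<open>auto intro!: borel_measurable_times borel_measurable_indicator\<close>)
    ultimately show ?thesis unfolding S_def \<Phi>_def by simp
  next
    case False
    then have Spos: "measure D S > 0" by (simp add: zero_less_measure_iff)
    define M where "M = uniform_measure D S"
    have PM: "prob_space M" unfolding M_def
      using Spos finite_measure.emeasure_eq_measure[OF FM, of S]
      by (intro prob_space_uniform_measure) auto
    have ind: "prob_space.indep_vars M (\<lambda>_. borel) (\<lambda>i p. fst p $ i) UNIV"
      using sd Spos c unfolding slar_dist_def M_def S_def by auto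
    have i1: "prob_space.indep_vars M (\<lambda>_. borel) (\<lambda>j p. (if j = i then 1 else W$j) * fst p $ j) UNIV"
      using prob_space.indep_vars_compose2[OF PM ind, of "\<lambda>j x. (if j = i then 1 else W$j) * x" "\<lambda>_. borel"]
      by simp
    have ins: "insert i (UNIV - {i}) = UNIV" by auto
    have i2: "prob_space.indep_var M borel (\<lambda>p. (if i = i then 1 else W$i) * fst p $ i) borel
          (\<lambda>p. \<Sum>j\<in>UNIV-{i}. (if j = i then 1 else W$j) * fst p $ j)"
      using prob_space.indep_vars_sum[OF PM, of "UNIV-{i}" i "\<lambda>j p. (if j = i then 1 else W$j) * fst p $ j"] i1
      unfolding ins by simp
    have sm: "(\<lambda>p. \<Sum>j\<in>UNIV-{i}. (if j = i then 1 else W$j) * fst p $ j) = (\<lambda>p. \<Sum>j\<in>UNIV-{i}. W$j * fst p $ j)"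
      by (intro ext sum.cong) auto
    have i3: "prob_space.indep_var M borel (\<lambda>p. fst p $ i) borel (\<lambda>p. \<Sum>j\<in>UNIV-{i}. W$j * fst p $ j)"
      using i2 unfolding sm by simp
    have i4: "prob_space.indep_var M borel (\<lambda>p. fst p $ i) borel \<Phi>"
      using prob_space.indep_var_compose[OF PM i3, of "\<lambda>x. x" borel G borel] Gm
      unfolding \<Phi>_def comp_def by simp
    have xintM: "integrable M (\<lambda>p. fst p $ i)" unfolding M_def by (rule unif_integrable[OF Sm Spos int_x])
    have \<Phi>intM: "integrable M \<Phi>" unfolding M_def by (rule unif_integrable[OF Sm Spos \<Phi>int])
    have prodM: "(\<integral>p. fst p $ i * \<Phi> p \<partial>M) = (\<integral>p. fst p $ i \<partial>M) * (\<integral>p. \<Phi> p \<partial>M)"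
      by (rule prob_space.indep_var_lebesgue_integral[OF PM i4 xintM \<Phi>intM])
    have A1: "(\<integral>p. indicator S p * (fst p $ i) \<partial>D) = c * (\<mu> $ i) * measure D S"
      using sd c unfolding slar_dist_def S_def by auto
    have e1: "(\<integral>p. fst p $ i \<partial>M) = c * \<mu>$i"
      unfolding M_def unif_integral[OF Sm Spos xm] A1 using Spos by simp
    have e2: "(\<integral>p. fst p $ i * \<Phi> p \<partial>M) = (\<integral>p. indicator S p * (fst p $ i * \<Phi> p) \<partial>D) / measure D S"
      unfolding M_def using xm \<Phi>m by (intro unif_integral[OF Sm Spos]) auto
    have e3: "(\<integral>p. \<Phi> p \<partial>M) = (\<integral>p. indicator S p * \<Phi> p \<partial>D) / measure D S"
      unfolding M_def using \<Phi>m by (intro unif_integral[OF Sm Spos])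
    have "(\<integral>p. indicator S p * (fst p $ i * \<Phi> p) \<partial>D) = c * \<mu>$i * (\<integral>p. indicator S p * \<Phi> p \<partial>D)"
      using prodM unfolding e1 e2 e3 using Spos by (simp add: field_simps)
    then show ?thesis unfolding S_def \<Phi>_def by simp
  qed
qed

lemma key_int:
  fixes W :: "real^'n" and G :: "real \<Rightarrow> real" and i :: 'n and c :: real
  assumes Gm: "G \<in> borel_measurable borel" and Gb: "\<And>r. \<bar>G r\<bar> \<le> 1"
  shows "integrable D (\<lambda>p. indicator {p::(real^'n)\<times>real. snd p = c} p * (fst p $ i * G (\<Sum>j\<in>UNIV-{i}. W$j * fst p $ j)))"
    and "integrable D (\<lambda>p. indicator {p::(real^'n)\<times>real. snd p = c} p * G (\<Sum>j\<in>UNIV-{i}. W$j * fst p $ j))"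
proof -
  show "integrable D (\<lambda>p. indicator {p::(real^'n)\<times>real. snd p = c} p * (fst p $ i * G (\<Sum>j\<in>UNIV-{i}. W$j * fst p $ j)))"
  proof (rule Bochner_Integration.integrable_bound[OF int_x[of i]])
    show "(\<lambda>p. indicator {p::(real^'n)\<times>real. snd p = c} p * (fst p $ i * G (\<Sum>j\<in>UNIV-{i}. W$j * fst p $ j))) \<in> borel_measurable D"
      unfolding measD using Gm by measurable
    show "AE p in D. norm (indicator {p::(real^'n)\<times>real. snd p = c} p * (fst p $ i * G (\<Sum>j\<in>UNIV-{i}. W$j * fst p $ j))) \<le> norm (fst p $ i)"
    proof (rule AE_I2)
      fix p :: "(real^'n)\<times>real"
      have "\<bar>fst p $ i * G (\<Sum>j\<in>UNIV-{i}. W$j * fst p $ j)\<bar> \<le> \<bar>fst p $ i\<bar> * 1"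
        unfolding abs_mult by (rule mult_left_mono) (use Gb in auto)
      then show "norm (indicator {p::(real^'n)\<times>real. snd p = c} p * (fst p $ i * G (\<Sum>j\<in>UNIV-{i}. W$j * fst p $ j))) \<le> norm (fst p $ i)"
        by (auto simp: indicator_def)
    qed
  qed
  show "integrable D (\<lambda>p. indicator {p::(real^'n)\<times>real. snd p = c} p * G (\<Sum>j\<in>UNIV-{i}. W$j * fst p $ j))"
  proof (rule Bochner_Integration.integrable_bound[OF int_const[of 1]])
    show "(\<lambda>p. indicator {p::(real^'n)\<times>real. snd p = c} p * G (\<Sum>j\<in>UNIV-{i}. W$j * fst p $ j)) \<in> borel_measurable D"
      unfolding measD using Gm by measurable
    show "AE p in D. norm (indicator {p::(real^'n)\<times>real. snd p = c} p * G (\<Sum>j\<in>UNIV-{i}. W$j * fst p $ j)) \<le> norm (1::real)"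
      using Gb by (auto simp: indicator_def)
  qed
qed

lemma int_h:
  fixes v s :: "real^'n" and \<epsilon> :: real
  shows "integrable D (\<lambda>p. max 0 (1 - snd p * (v \<bullet> (fst p + (- (snd p * \<epsilon>)) *\<^sub>R s))))"
proof -
  have vx: "(\<lambda>p. v \<bullet> fst p) = (\<lambda>p. \<Sum>j\<in>UNIV. v$j * fst p $ j)" by (simp add: inner_vec_def)
  have iv: "integrable D (\<lambda>p. v \<bullet> fst p)" unfolding vx by (rule Bochner_Integration.integrable_sum) (rule integrable_mult_right, rule int_x)
  have ib: "integrable D (\<lambda>p. 1 + \<bar>v \<bullet> fst p\<bar> + \<bar>\<epsilon> * (v \<bullet> s)\<bar>)"
    by (rule Bochner_Integration.integrable_add[OF Bochner_Integration.integrable_add[OF int_const integrable_abs[OF iv]] int_const])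
  show ?thesis
  proof (rule Bochner_Integration.integrable_bound[OF ib])
    show "(\<lambda>p. max 0 (1 - snd p * (v \<bullet> (fst p + (- (snd p * \<epsilon>)) *\<^sub>R s)))) \<in> borel_measurable D"
      unfolding measD inner_add_right inner_scaleR_right by measurable
    show "AE p in D. norm (max 0 (1 - snd p * (v \<bullet> (fst p + (- (snd p * \<epsilon>)) *\<^sub>R s))))
        \<le> norm (1 + \<bar>v \<bullet> fst p\<bar> + \<bar>\<epsilon> * (v \<bullet> s)\<bar>)"
      using AEy by eventually_elim (auto simp: inner_add_right inner_diff_right split: abs_split)
  qed
qed

lemma core:
  fixes W s :: "real^'n" and i :: 'n and lam \<epsilon> :: real
  assumes lam: "lam > 0" and eps: "\<epsilon> > 0" and mu: "\<bar>\<mu>$i\<bar> \<le> \<epsilon>"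
    and si: "s$i = 1 \<or> s$i = -1" and pos: "s$i * W$i > 0"
  shows "U_obj D lam (\<lambda>p. (- (snd p * \<epsilon>)) *\<^sub>R s) (\<chi> j. if j = i then 0 else W$j)
           < U_obj D lam (\<lambda>p. (- (snd p * \<epsilon>)) *\<^sub>R s) W"
proof -
  define W' where "W' = (\<chi> j. if j = i then 0 else W$j)"
  define L where "L = (\<lambda>x::real^'n. \<Sum>j\<in>UNIV-{i}. W$j * x$j)"
  define k where "k = W' \<bullet> s"
  have dotW': "W' \<bullet> v = L v" for v
  proof -
    have "W' \<bullet> v = (\<Sum>j\<in>UNIV. (if j = i then 0 else W$j) * v$j)" by (simp add: W'_def inner_vec_def)
    also have "\<dots> = (\<Sum>j\<in>UNIV-{i}. (if j = i then 0 else W$j) * v$j)"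
      by (rule sum.mono_neutral_right) auto
    also have "\<dots> = L v" unfolding L_def by (rule sum.cong) auto
    finally show ?thesis .
  qed
  have dotW: "W \<bullet> v = L v + W$i * v$i" for v
  proof -
    have "W \<bullet> v = (\<Sum>j\<in>UNIV. W$j * v$j)" by (simp add: inner_vec_def)
    also have "\<dots> = W$i * v$i + (\<Sum>j\<in>UNIV-{i}. W$j * v$j)" by (rule sum.remove) auto
    finally show ?thesis unfolding L_def by simp
  qed
  define A where "A = (\<lambda>p::(real^'n)\<times>real. 1 - snd p * L (fst p) + (snd p)\<^sup>2 * \<epsilon> * k)"
  define B where "B = (\<lambda>p::(real^'n)\<times>real. W$i * ((snd p)\<^sup>2 * \<epsilon> * s$i - snd p * fst p $ i))"
  define h where "h = (\<lambda>v p. max 0 (1 - snd p * (v \<bullet> (fst p + (- (snd p * \<epsilon>)) *\<^sub>R s))))"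
  have hW': "h W' p = max 0 (A p)" for p
    unfolding h_def A_def k_def by (simp add: inner_add_right dotW' power2_eq_square algebra_simps)
  have hW: "h W p = max 0 (A p + B p)" for p
    unfolding h_def A_def B_def k_def by (simp add: inner_add_right dotW dotW' power2_eq_square algebra_simps)
  have eqW': "h W' = (\<lambda>p. max 0 (A p))" using hW' by auto
  have sub: "max 0 (A p) + (if A p > 0 then B p else 0) \<le> h W p" for p
    unfolding hW by auto
  have Am: "A \<in> borel_measurable D" unfolding measD A_def L_def by measurable
  have Bm: "B \<in> borel_measurable D" unfolding measD B_def by measurable
  have intW: "integrable D (h W)" unfolding h_def by (rule int_h)
  have intA: "integrable D (\<lambda>p. max 0 (A p))" using int_h[of W' \<epsilon> s] unfolding eqW'[symmetric] h_def .
  have bnd: "\<bar>W$i * (y\<^sup>2 * \<epsilon> * s$i - y * x)\<bar> \<le> \<bar>W$i\<bar> * (\<epsilon> + \<bar>x\<bar>)" if "y = 1 \<or> y = -1" for y x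
  proof -
    have "\<bar>y\<^sup>2 * \<epsilon> * s$i - y * x\<bar> \<le> \<epsilon> + \<bar>x\<bar>" using that si eps by auto
    then show ?thesis by (simp add: abs_mult mult_left_mono)
  qed
  have intIf: "integrable D (\<lambda>p. if A p > 0 then B p else 0)"
  proof (rule Bochner_Integration.integrable_bound)
    show "integrable D (\<lambda>p. \<bar>W$i\<bar> * (\<epsilon> + \<bar>fst p $ i\<bar>))"
      by (rule integrable_mult_right, rule Bochner_Integration.integrable_add[OF int_const integrable_abs[OF int_x]])
    show "(\<lambda>p. if A p > 0 then B p else 0) \<in> borel_measurable D" using Am Bm by measurable
    show "AE p in D. norm (if A p > 0 then B p else 0) \<le> norm (\<bar>W$i\<bar> * (\<epsilon> + \<bar>fst p $ i\<bar>))"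
      using AEy
    proof eventually_elim
      case (elim p)
      have "\<bar>B p\<bar> \<le> \<bar>W$i\<bar> * (\<epsilon> + \<bar>fst p $ i\<bar>)" unfolding B_def by (rule bnd[OF elim])
      then show ?case using eps by auto
    qed
  qed
  have I1: "(\<integral>p. h W' p \<partial>D) + (\<integral>p. (if A p > 0 then B p else 0) \<partial>D) \<le> (\<integral>p. h W p \<partial>D)"
  proof -
    have "(\<integral>p. h W' p \<partial>D) + (\<integral>p. (if A p > 0 then B p else 0) \<partial>D)
        = (\<integral>p. max 0 (A p) + (if A p > 0 then B p else 0) \<partial>D)"
      unfolding eqW' by (rule Bochner_Integration.integral_add[symmetric]) (use intA intIf in auto)
    also have "\<dots> \<le> (\<integral>p. h W p \<partial>D)" by (rule Bochner_Integration.integral_mono) (use intA intIf intW sub in auto)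
    finally show ?thesis .
  qed
  define G where "G = (\<lambda>c r. if 0 < 1 - c * r + \<epsilon> * k then 1 else (0::real))"
  define F where "F = (\<lambda>c p. (- (W$i * c)) * (indicator {p::(real^'n)\<times>real. snd p = c} p * (fst p $ i * G c (L (fst p))))
        + (W$i * \<epsilon> * s$i) * (indicator {p::(real^'n)\<times>real. snd p = c} p * G c (L (fst p))))"
  have Gm: "G c \<in> borel_measurable borel" for c unfolding G_def by measurable
  have Gb: "\<bar>G c r\<bar> \<le> 1" for c r unfolding G_def by auto
  have Fint: "integrable D (F c)" for c
    unfolding F_def L_def
    by (intro Bochner_Integration.integrable_add integrable_mult_right key_int[OF Gm Gb])
  have Fnn: "integral\<^sup>L D (F c) \<ge> 0" if c: "c = -1 \<or> c = 1" for c
  proof -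
    define Q where "Q = (\<integral>p. indicator {p::(real^'n)\<times>real. snd p = c} p * G c (L (fst p)) \<partial>D)"
    have Q0: "Q \<ge> 0" unfolding Q_def by (rule integral_nonneg_AE) (auto simp: G_def indicator_def)
    have "integral\<^sup>L D (F c) = (- (W$i * c)) * (c * \<mu>$i * Q) + (W$i * \<epsilon> * s$i) * Q"
    proof -
      have iX: "integrable D (\<lambda>p. indicator {p::(real^'n)\<times>real. snd p = c} p * (fst p $ i * G c (L (fst p))))"
        unfolding L_def by (rule key_int(1)[OF Gm Gb])
      have iY: "integrable D (\<lambda>p. indicator {p::(real^'n)\<times>real. snd p = c} p * G c (L (fst p)))"
        unfolding L_def by (rule key_int(2)[OF Gm Gb])
      have X: "(\<integral>p. indicator {p::(real^'n)\<times>real. snd p = c} p * (fst p $ i * G c (L (fst p))) \<partial>D) = c * \<mu>$i * Q"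
        unfolding Q_def L_def by (rule key[OF c Gm Gb])
      show ?thesis unfolding F_def
        unfolding Bochner_Integration.integral_add[OF integrable_mult_right[OF iX] integrable_mult_right[OF iY]]
          integral_mult_right_zero X Q_def ..
    qed
    also have "\<dots> = (W$i * (\<epsilon> * s$i - \<mu>$i)) * Q" using c by (auto simp: algebra_simps)
    also have "\<dots> \<ge> 0"
    proof (rule mult_nonneg_nonneg[OF _ Q0])
      show "0 \<le> W$i * (\<epsilon> * s$i - \<mu>$i)"
        using si
      proof
        assume "s$i = 1" then show ?thesis using pos mu by (simp add: abs_le_iff)
      next
        assume "s$i = -1" then show ?thesis using pos mu
          by (intro mult_nonpos_nonpos) (auto simp: abs_le_iff)
      qed
    qed
    finally show ?thesis .
  qed
  have N0: "(\<integral>p. (if A p > 0 then B p else 0) \<partial>D) \<ge> 0"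
  proof -
    have "(\<integral>p. (if A p > 0 then B p else 0) \<partial>D) = (\<integral>p. F (-1) p + F 1 p \<partial>D)"
    proof (rule integral_cong_AE)
      show "(\<lambda>p. if A p > 0 then B p else 0) \<in> borel_measurable D" using Am Bm by measurable
      show "(\<lambda>p. F (-1) p + F 1 p) \<in> borel_measurable D" using Fint by auto
      show "AE p in D. (if A p > 0 then B p else 0) = F (-1) p + F 1 p"
        using AEy
      proof eventually_elim
        case (elim p)
        then show ?case
        proof
          assume y: "snd p = 1"
          show ?thesis
            by (cases "0 < A p") (simp_all add: y A_def B_def F_def G_def indicator_def right_diff_distrib)
        next
          assume y: "snd p = -1"
          show ?thesis
            by (cases "0 < A p") (simp_all add: y A_def B_def F_def G_def indicator_def right_diff_distrib)
        qed
      qed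
    qed
    also have "\<dots> = integral\<^sup>L D (F (-1)) + integral\<^sup>L D (F 1)"
      by (rule Bochner_Integration.integral_add) (use Fint in auto)
    also have "\<dots> \<ge> 0" using Fnn[of "-1"] Fnn[of 1] by simp
    finally show ?thesis .
  qed
  have LW: "L W' = L W" unfolding L_def W'_def by (rule sum.cong) auto
  have nrm: "(norm W)\<^sup>2 = (norm W')\<^sup>2 + (W$i)\<^sup>2"
    unfolding power2_norm_eq_inner dotW dotW' LW by (simp add: power2_eq_square)
  have Wi: "(W$i)\<^sup>2 > 0" using pos by auto
  have U: "U_obj D lam (\<lambda>p. (- (snd p * \<epsilon>)) *\<^sub>R s) v = (\<integral>p. h v p \<partial>D) + lam / 2 * (norm v)\<^sup>2" for v
    unfolding U_obj_def h_def by simp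
  have P: "lam / 2 * (W$i)\<^sup>2 > 0" using lam Wi by simp
  show ?thesis unfolding W'_def[symmetric] U nrm distrib_left using I1 N0 P by linarith
qed

end


theorem mainTheorem8:
  fixes D :: "((real^'n) \<times> real) measure" and \<mu> :: "real^'n"
    and lam \<epsilon> :: real and w :: "nat \<Rightarrow> real^'n" and i :: 'n and t :: nat
  assumes "slar_dist D \<mu>" and "lam > 0" and "\<epsilon> > 0"
    and "AT_seq D lam \<epsilon> w"
    and "\<bar>\<mu> $ i\<bar> \<le> \<epsilon>"
    and "t > 0"
  shows "(w t $ i > 0 \<longrightarrow> w (Suc t) $ i \<le> 0) \<and> (w t $ i < 0 \<longrightarrow> w (Suc t) $ i \<ge> 0)"
proof -
  interpret slar D \<mu> using assms(1) by unfold_locales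
  define W where "W = w (Suc t)"
  define s where "s = (\<chi> j. sgn (w t $ j))"
  have ap: "at_perturb \<epsilon> (w t) = (\<lambda>p. (- (snd p * \<epsilon>)) *\<^sub>R s)" unfolding at_perturb_def s_def by simp
  have min: "U_obj D lam (\<lambda>p. (- (snd p * \<epsilon>)) *\<^sub>R s) W \<le> U_obj D lam (\<lambda>p. (- (snd p * \<epsilon>)) *\<^sub>R s) v" for v
    using assms(4) unfolding AT_seq_def W_def ap[symmetric] by blast
  have no: "\<not> (s$i * W$i > 0)" if si: "s$i = 1 \<or> s$i = -1"
  proof
    assume pos: "s$i * W$i > 0"
    have "U_obj D lam (\<lambda>p. (- (snd p * \<epsilon>)) *\<^sub>R s) (\<chi> j. if j = i then 0 else W$j)
           < U_obj D lam (\<lambda>p. (- (snd p * \<epsilon>)) *\<^sub>R s) W"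
      by (rule core[OF assms(2) assms(3) assms(5) si pos])
    with min[of "\<chi> j. if j = i then 0 else W$j"] show False by linarith
  qed
  have sv: "s$i = sgn (w t $ i)" unfolding s_def by simp
  show ?thesis
  proof (intro conjI impI)
    assume "w t $ i > 0"
    then have "s$i = 1" using sv by simp
    with no show "w (Suc t) $ i \<le> 0" unfolding W_def by force
  next
    assume "w t $ i < 0"
    then have "s$i = -1" using sv by simp
    with no show "w (Suc t) $ i \<ge> 0" unfolding W_def by force
  qed
qed

end
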